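(* Let $n\ge1$, $0\le k\le n$, $D^\star\in(0,1)$, $\varepsilon\in(0,D^\star)$ and $\rho=\varepsilon(D^\star-\varepsilon)/(2n)$. Consider the set $\mathcal F_k$ of $\lambda\in\mathcal L_n$ such that, with $t=t_{\mathrm{wf}}(\lambda,D^\star)$, we have $\lambda_i\ge t+\rho$ for all $i\le k$ and $0\le\lambda_i\le t-\rho$ for all $i>k$. Then every maximizer $\lambda^\star$ of $G(\lambda)=\mathbf R_{\mathrm{rc}}(\lambda,D^\star)-\mathbf R_{\mathrm{wf}}(\lambda,D^\star)$ over $\mathcal F_k$ satisfies $\lambda^\star_{k+1}=\lambda^\star_{k+2}=\dots=\lambda^\star_n$.
   Context: Logarithms are base 2. $\mathcal L_n=\{\lambda\in\mathbb R^n_{\ge0}:\sum_i\lambda_i=n\}$. For $\lambda\in\mathcal L_n$ and $T,t>0$: $D_{\mathrm{rc}}(\lambda,T)=\frac1n\sum_i\frac{\lambda_i}{1+\lambda_iT}$, $R_{\mathrm{rc}}(\lambda,T)=\frac1{2n}\sum_i\log(1+\lambda_iT)$, $D_{\mathrm{wf}}(\lambda,t)=\frac1n\sum_i\min\{\lambda_i,t\}$, $R_{\mathrm{wf}}(\lambda,t)=\frac1{2n}\sum_i\max\{0,\log(\lambda_i/t)\}$. For $D\in(0,1)$, $T_{\mathrm{rc}}(\lambda,D)$ is the unique $T>0$ with $D_{\mathrm{rc}}(\lambda,T)=D$, and $t_{\mathrm{wf}}(\lambda,D)$ is the unique $t\in(0,\max_i\lambda_i)$ with $D_{\mathrm{wf}}(\lambda,t)=D$.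 Set $\mathbf R_{\mathrm{rc}}(\lambda,D)=R_{\mathrm{rc}}(\lambda,T_{\mathrm{rc}}(\lambda,D))$ and $\mathbf R_{\mathrm{wf}}(\lambda,D)=R_{\mathrm{wf}}(\lambda,t_{\mathrm{wf}}(\lambda,D))$. *)

theory Defs
  imports Complex_Main
begin

text \<open>Vectors in R^n are represented as functions nat => real, indexed by {1..n}.
  Logarithms are base 2.\<close>

definition Lset :: "nat \<Rightarrow> (nat \<Rightarrow> real) set" where
  "Lset n = {lam. (\<forall>i\<in>{1..n}. lam i \<ge> 0) \<and> (\<Sum>i=1..n. lam i) = real n}"

definition D_rc :: "nat \<Rightarrow> (nat \<Rightarrow> real) \<Rightarrow> real \<Rightarrow> real" where
  "D_rc n lam T = (1 / real n) * (\<Sum>i=1..n. lam i / (1 + lam i * T))"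

definition R_rc :: "nat \<Rightarrow> (nat \<Rightarrow> real) \<Rightarrow> real \<Rightarrow> real" where
  "R_rc n lam T = (1 / (2 * real n)) * (\<Sum>i=1..n. log 2 (1 + lam i * T))"

definition D_wf :: "nat \<Rightarrow> (nat \<Rightarrow> real) \<Rightarrow> real \<Rightarrow> real" where
  "D_wf n lam t = (1 / real n) * (\<Sum>i=1..n. min (lam i) t)"

definition R_wf :: "nat \<Rightarrow> (nat \<Rightarrow> real) \<Rightarrow> real \<Rightarrow> real" where
  "R_wf n lam t = (1 / (2 * real n)) * (\<Sum>i=1..n. max 0 (log 2 (lam i / t)))"

definition T_rc :: "nat \<Rightarrow> (nat \<Rightarrow> real) \<Rightarrow> real \<Rightarrow> real" where
  "T_rc n lam D = (THE T. T > 0 \<and> D_rc n lam T = D)"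

definition t_wf :: "nat \<Rightarrow> (nat \<Rightarrow> real) \<Rightarrow> real \<Rightarrow> real" where
  "t_wf n lam D = (THE t. 0 < t \<and> t < Max (lam ` {1..n}) \<and> D_wf n lam t = D)"

definition RR_rc :: "nat \<Rightarrow> (nat \<Rightarrow> real) \<Rightarrow> real \<Rightarrow> real" where
  "RR_rc n lam D = R_rc n lam (T_rc n lam D)"

definition RR_wf :: "nat \<Rightarrow> (nat \<Rightarrow> real) \<Rightarrow> real \<Rightarrow> real" where
  "RR_wf n lam D = R_wf n lam (t_wf n lam D)"

definition Gobj :: "nat \<Rightarrow> real \<Rightarrow> (nat \<Rightarrow> real) \<Rightarrow> real" where
  "Gobj n D lam = RR_rc n lam D - RR_wf n lam D"

definition Fset :: "nat \<Rightarrow> nat \<Rightarrow> real \<Rightarrow> real \<Rightarrow> (nat \<Rightarrow> real) set" where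
  "Fset n k D rho = {lam. lam \<in> Lset n \<and>
     (\<forall>i\<in>{1..k}. lam i \<ge> t_wf n lam D + rho) \<and>
     (\<forall>i\<in>{k+1..n}. 0 \<le> lam i \<and> lam i \<le> t_wf n lam D - rho)}"

end

theory Submission
  imports Defs
begin

lemma ln_strict: fixes x :: real assumes "0 < x" "x \<noteq> 1" shows "ln x < x - 1"
proof -
  have s: "0 < sqrt x" using assms by simp
  have "ln x = 2 * ln (sqrt x)" using assms by (simp add: ln_sqrt)
  also have "\<dots> \<le> 2 * (sqrt x - 1)" using ln_le_minus_one[OF s] by simp
  also have "\<dots> < x - 1"
  proof -
    have "sqrt x \<noteq> 1" using assms by auto
    hence "0 < (sqrt x - 1)^2" by simp
    moreover have "(sqrt x)^2 = x" using assms by simp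
    ultimately show ?thesis by (simp add: power2_eq_square algebra_simps)
  qed
  finally show ?thesis .
qed

lemma tan_frac:
  fixes x a T :: real assumes "0 \<le> x" "0 \<le> a" "0 < T"
  shows "x/(1+x*T) \<le> a/(1+a*T) + (x-a)/(1+a*T)^2"
proof -
  have p1: "0 < 1+x*T" "0 < 1+a*T" using assms by (auto intro: add_pos_nonneg)
  have "a/(1+a*T) + (x-a)/(1+a*T)^2 - x/(1+x*T) = (x-a)^2*T/((1+x*T)*(1+a*T)^2)"
    using p1 by (simp add: divide_simps) (simp add: power2_eq_square algebra_simps)
  moreover have "(x-a)^2*T/((1+x*T)*(1+a*T)^2) \<ge> 0" using p1 assms by simp
  ultimately show ?thesis by linarith
qed

lemma tan_log:
  fixes x a T :: real assumes "0 \<le> x" "0 \<le> a" "0 < T"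
  shows "log 2 (1+x*T) \<le> log 2 (1+a*T) + (x-a)*(T/((1+a*T)*ln 2))"
    and "x \<noteq> a \<Longrightarrow> log 2 (1+x*T) < log 2 (1+a*T) + (x-a)*(T/((1+a*T)*ln 2))"
proof -
  have p1: "0 < 1+x*T" "0 < 1+a*T" using assms by (auto intro: add_pos_nonneg)
  have q: "(1+x*T)/(1+a*T) - 1 = (x-a)*T/(1+a*T)" using p1 by (simp add: field_simps)
  have eq: "log 2 (1+x*T) - log 2 (1+a*T) = ln ((1+x*T)/(1+a*T)) / ln 2"
    using p1 by (simp add: log_def ln_div diff_divide_distrib)
  have l2: "0 < ln (2::real)" by simp
  have "ln ((1+x*T)/(1+a*T)) \<le> (x-a)*T/(1+a*T)" using ln_le_minus_one[of "(1+x*T)/(1+a*T)"] p1 q by simp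
  hence "ln ((1+x*T)/(1+a*T)) / ln 2 \<le> (x-a)*T/(1+a*T) / ln 2" using l2 by (intro divide_right_mono) auto
  moreover have rw: "(x-a)*(T/((1+a*T)*ln 2)) = (x-a)*T/(1+a*T)/ln 2" by simp
  ultimately show "log 2 (1+x*T) \<le> log 2 (1+a*T) + (x-a)*(T/((1+a*T)*ln 2))" using eq by linarith
  assume "x \<noteq> a"
  hence "(1+x*T)/(1+a*T) \<noteq> 1" using p1 assms by (simp add: field_simps)
  hence "ln ((1+x*T)/(1+a*T)) < (x-a)*T/(1+a*T)" using ln_strict[of "(1+x*T)/(1+a*T)"] p1 q by simp
  hence "ln ((1+x*T)/(1+a*T)) / ln 2 < (x-a)*T/(1+a*T) / ln 2" using l2 by (intro divide_strict_right_mono) auto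
  thus "log 2 (1+x*T) < log 2 (1+a*T) + (x-a)*(T/((1+a*T)*ln 2))" using eq rw by linarith
qed

lemma Lset_le: assumes "lam \<in> Lset n" "i \<in> {1..n}" shows "lam i \<le> real n"
proof -
  have "lam i \<le> (\<Sum>j=1..n. lam j)" using assms by (intro member_le_sum) (auto simp: Lset_def)
  thus ?thesis using assms by (simp add: Lset_def)
qed

lemma Lset_pos: assumes "lam \<in> Lset n" "n \<ge> 1" shows "\<exists>i\<in>{1..n}. lam i > 0"
proof (rule ccontr)
  assume "\<not> ?thesis"
  hence "\<forall>i\<in>{1..n}. lam i = 0" using assms by (force simp: Lset_def)
  hence "(\<Sum>j=1..n. lam j) = 0" by simp
  thus False using assms by (simp add: Lset_def)
qed

lemma Dwf_at_top: assumes "lam \<in> Lset n" "n \<ge> 1" "Max (lam ` {1..n}) \<le> t"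
  shows "D_wf n lam t = 1"
proof -
  have "\<forall>i\<in>{1..n}. min (lam i) t = lam i"
  proof
    fix i assume "i \<in> {1..n}"
    hence "lam i \<le> Max (lam ` {1..n})" by (intro Max_ge) auto
    hence "lam i \<le> t" using assms(3) by linarith
    thus "min (lam i) t = lam i" by simp
  qed
  hence "(\<Sum>i=1..n. min (lam i) t) = real n" using assms by (simp add: Lset_def)
  thus ?thesis using assms by (simp add: D_wf_def)
qed

lemma Dwf_strict: assumes "n \<ge> 1" "t < t'" "t < Max (lam ` {1..n})"
  shows "D_wf n lam t < D_wf n lam t'"
proof -
  have "Max (lam ` {1..n}) \<in> lam ` {1..n}" by (rule Max_in) (use assms in auto)
  then obtain i0 where i0: "i0 \<in> {1..n}" "lam i0 = Max (lam ` {1..n})" by auto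
  have "(\<Sum>i=1..n. min (lam i) t) < (\<Sum>i=1..n. min (lam i) t')"
  proof (rule sum_strict_mono_ex1)
    show "\<forall>i\<in>{1..n}. min (lam i) t \<le> min (lam i) t'" using assms by auto
    show "\<exists>i\<in>{1..n}. min (lam i) t < min (lam i) t'"
    proof (intro bexI[OF _ i0(1)])
      have "t < lam i0" using assms i0 by simp
      thus "min (lam i0) t < min (lam i0) t'" using assms by simp
    qed
  qed simp
  thus ?thesis using assms by (simp add: D_wf_def divide_strict_right_mono)
qed

lemma twf_eq: assumes "lam \<in> Lset n" "n \<ge> 1" "D < 1" "0 < t" "D_wf n lam t = D"
  shows "t_wf n lam D = t"
proof -
  have tm: "t < Max (lam ` {1..n})"
  proof (rule ccontr)
    assume "\<not> ?thesis"
    hence "D_wf n lam t = 1" using Dwf_at_top[OF assms(1,2), of t] by linarith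
    thus False using assms by simp
  qed
  show ?thesis unfolding t_wf_def
  proof (rule the_equality)
    show "0 < t \<and> t < Max (lam ` {1..n}) \<and> D_wf n lam t = D" using assms tm by auto
    fix t' assume h: "0 < t' \<and> t' < Max (lam ` {1..n}) \<and> D_wf n lam t' = D"
    show "t' = t"
    proof (rule ccontr)
      assume "t' \<noteq> t"
      hence "t < t' \<or> t' < t" by auto
      thus False using Dwf_strict[OF assms(2), of t t' lam] Dwf_strict[OF assms(2), of t' t lam] h tm assms
        by auto
    qed
  qed
qed

lemma twf_exists: assumes "lam \<in> Lset n" "n \<ge> 1" "0 < D" "D < 1"
  shows "\<exists>t>0. D_wf n lam t = D"
proof -
  let ?M = "Max (lam ` {1..n})"
  have f0: "D_wf n lam 0 = 0" using assms by (simp add: D_wf_def Lset_def)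
  have fM: "D_wf n lam ?M = 1" using Dwf_at_top[OF assms(1,2)] by simp
  have "lam 1 \<le> ?M" by (intro Max_ge) (use assms in auto)
  moreover have "0 \<le> lam 1" using assms by (auto simp: Lset_def)
  ultimately have M0: "0 \<le> ?M" by linarith
  have c: "\<forall>x. 0 \<le> x \<and> x \<le> ?M \<longrightarrow> isCont (D_wf n lam) x"
    unfolding D_wf_def using assms(2) by (auto intro!: continuous_intros)
  obtain x where "0 \<le> x" "D_wf n lam x = D" using IVT[of "D_wf n lam" 0 D ?M, OF _ _ M0 c] f0 fM assms by auto
  moreover have "x \<noteq> 0" using f0 assms calculation by auto
  ultimately have "0 < x" "D_wf n lam x = D" by auto
  thus ?thesis by blast
qed

lemma Drc_strict: assumes "lam \<in> Lset n" "n \<ge> 1" "0 < T" "T < T'"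
  shows "D_rc n lam T' < D_rc n lam T"
proof -
  obtain i0 where i0: "i0 \<in> {1..n}" "lam i0 > 0" using Lset_pos[OF assms(1,2)] by auto
  have "(\<Sum>i=1..n. lam i / (1 + lam i * T')) < (\<Sum>i=1..n. lam i / (1 + lam i * T))"
  proof (rule sum_strict_mono_ex1)
    show "\<forall>i\<in>{1..n}. lam i / (1 + lam i * T') \<le> lam i / (1 + lam i * T)"
    proof
      fix i assume "i \<in> {1..n}"
      hence li: "0 \<le> lam i" using assms by (simp add: Lset_def)
      have "0 < 1 + lam i * T'" "0 < 1 + lam i * T" using li assms by (auto intro: add_pos_nonneg)
      moreover have "lam i * T \<le> lam i * T'" using li assms by (intro mult_left_mono) auto
      ultimately show "lam i / (1 + lam i * T') \<le> lam i / (1 + lam i * T)" using li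
        by (intro divide_left_mono) auto
    qed
    have "lam i0 * T < lam i0 * T'" using i0 assms by simp
    moreover have "0 < 1 + lam i0 * T'" "0 < 1 + lam i0 * T" using i0 assms by (auto intro: add_pos_nonneg)
    ultimately show "\<exists>i\<in>{1..n}. lam i / (1 + lam i * T') < lam i / (1 + lam i * T)" using i0 assms
      by (intro bexI[OF _ i0(1)] divide_strict_left_mono) auto
  qed simp
  thus ?thesis using assms by (simp add: D_rc_def divide_strict_right_mono)
qed

lemma Trc_eq: assumes "lam \<in> Lset n" "n \<ge> 1" "0 < T" "D_rc n lam T = D"
  shows "T_rc n lam D = T"
  unfolding T_rc_def
proof (rule the_equality)
  show "0 < T \<and> D_rc n lam T = D" using assms by auto
  fix T' assume h: "0 < T' \<and> D_rc n lam T' = D"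
  show "T' = T"
  proof (rule ccontr)
    assume "T' \<noteq> T"
    hence "T < T' \<or> T' < T" by auto
    thus False using Drc_strict[OF assms(1,2), of T T'] Drc_strict[OF assms(1,2), of T' T] h assms by auto
  qed
qed

lemma Trc_exists: assumes "lam \<in> Lset n" "n \<ge> 1" "0 < D" "D < 1"
  shows "\<exists>T>0. D_rc n lam T = D"
proof -
  define T1 where "T1 = (1-D)/(2*real n*D)"
  define T2 where "T2 = 1/D"
  have T1p: "0 < T1" using assms by (simp add: T1_def)
  have "(1-D)/(2*real n) \<le> 1" using assms by (simp add: field_simps)
  hence "(1-D)/(2*real n)/D \<le> 1/D" using assms by (intro divide_right_mono) auto
  hence T12: "T1 \<le> T2" by (simp add: T1_def T2_def)
  have nT: "1 + real n * T1 = (1+D)/(2*D)" using assms by (simp add: T1_def field_simps)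
  have "(\<Sum>i=1..n. lam i / (1 + real n * T1)) \<le> (\<Sum>i=1..n. lam i / (1 + lam i * T1))"
  proof (rule sum_mono)
    fix i assume i: "i \<in> {1..n}"
    hence "0 \<le> lam i" "lam i \<le> real n" using assms Lset_le[OF assms(1) i] by (auto simp: Lset_def)
    moreover have "0 < 1 + lam i * T1" "0 < 1 + real n * T1" using T1p \<open>0 \<le> lam i\<close> by (auto intro: add_pos_nonneg)
    moreover have "lam i * T1 \<le> real n * T1" using T1p \<open>lam i \<le> real n\<close> by (intro mult_right_mono) auto
    ultimately show "lam i / (1 + real n * T1) \<le> lam i / (1 + lam i * T1)"
      by (intro divide_left_mono) auto
  qed
  hence "real n / (1 + real n * T1) \<le> (\<Sum>i=1..n. lam i / (1 + lam i * T1))"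
    using assms by (simp add: Lset_def sum_divide_distrib[symmetric])
  hence "1 / (1 + real n * T1) \<le> D_rc n lam T1" using assms
    by (simp add: D_rc_def divide_right_mono field_simps)
  moreover have "D \<le> 1 / (1 + real n * T1)" unfolding nT using assms by (simp add: field_simps)
  ultimately have f1: "D \<le> D_rc n lam T1" by linarith
  have "(\<Sum>i=1..n. lam i / (1 + lam i * T2)) \<le> (\<Sum>i=1..n. D)"
  proof (rule sum_mono)
    fix i assume i: "i \<in> {1..n}"
    hence "0 \<le> lam i" using assms by (auto simp: Lset_def)
    thus "lam i / (1 + lam i * T2) \<le> D" using assms by (simp add: T2_def field_simps)
  qed
  hence f2: "D_rc n lam T2 \<le> D" using assms by (simp add: D_rc_def pos_divide_le_eq mult.commute)
  have c: "\<forall>x. T1 \<le> x \<and> x \<le> T2 \<longrightarrow> isCont (D_rc n lam) x"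
  proof (intro allI impI)
    fix x assume "T1 \<le> x \<and> x \<le> T2"
    hence "0 < x" using T1p by auto
    have "\<forall>i\<in>{1..n}. 1 + lam i * x \<noteq> 0"
    proof
      fix i assume "i \<in> {1..n}"
      hence "0 \<le> lam i" using assms by (auto simp: Lset_def)
      hence "0 \<le> lam i * x" using \<open>0 < x\<close> by simp
      thus "1 + lam i * x \<noteq> 0" by linarith
    qed
    thus "isCont (D_rc n lam) x" unfolding D_rc_def using assms(2) by (auto intro!: continuous_intros)
  qed
  obtain x where "T1 \<le> x" "D_rc n lam x = D" using IVT2[of "D_rc n lam" T2 D T1, OF f2 f1 T12 c] by auto
  thus ?thesis using T1p by (intro exI[of _ x]) auto
qed


lemma sum_if_S: fixes n k :: nat and g :: "nat \<Rightarrow> real" shows "(\<Sum>i=1..n. if k < i then g i else 0) = (\<Sum>i\<in>{k+1..n}. (g i::real))"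
proof -
  have "{i\<in>{1..n}. k < i} = {k+1..n}" by auto
  thus ?thesis using sum.inter_filter[of "{1..n}" g "\<lambda>i. k < i"] by simp
qed

theorem claimD2:
  fixes n k :: nat and Ds eps :: real and lamS :: "nat \<Rightarrow> real"
  assumes "n \<ge> 1" and "k \<le> n"
    and "0 < Ds" and "Ds < 1"
    and "0 < eps" and "eps < Ds"
    and "lamS \<in> Fset n k Ds (eps * (Ds - eps) / (2 * real n))"
    and "\<forall>lam \<in> Fset n k Ds (eps * (Ds - eps) / (2 * real n)). Gobj n Ds lam \<le> Gobj n Ds lamS"
  shows "\<forall>i\<in>{k+1..n}. \<forall>j\<in>{k+1..n}. lamS i = lamS j"
proof (rule ccontr)
  assume "\<not> ?thesis"
  then obtain i1 j1 where ij: "i1 \<in> {k+1..n}" "j1 \<in> {k+1..n}" "lamS i1 \<noteq> lamS j1" by auto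
  define rho where "rho = eps * (Ds - eps) / (2 * real n)"
  have rho: "0 < rho" using assms by (simp add: rho_def)
  have L: "lamS \<in> Lset n" using assms(7) by (simp add: Fset_def)
  have nn: "\<forall>i\<in>{1..n}. 0 \<le> lamS i" and sn: "(\<Sum>i=1..n. lamS i) = real n" using L by (auto simp: Lset_def)
  obtain t where t: "0 < t" "D_wf n lamS t = Ds" using twf_exists[OF L assms(1,3,4)] by auto
  have tw: "t_wf n lamS Ds = t" using twf_eq[OF L assms(1,4) t] .
  have big: "\<forall>i\<in>{1..k}. lamS i \<ge> t + rho" and small: "\<forall>i\<in>{k+1..n}. 0 \<le> lamS i \<and> lamS i \<le> t - rho"
    using assms(7) tw by (auto simp: Fset_def rho_def)
  define S where "S = {k+1..n}"
  have Sne: "S \<noteq> {}" and fS: "finite S" using ij by (auto simp: S_def)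
  have cS: "0 < real (card S)" using Sne fS by (simp add: card_gt_0_iff)
  define a where "a = (\<Sum>i\<in>S. lamS i) / real (card S)"
  have sumS: "(\<Sum>i\<in>S. lamS i - a) = 0" using cS by (simp add: a_def sum_subtractf)
  have a_lo: "0 \<le> a" using small cS unfolding a_def S_def by (intro divide_nonneg_pos sum_nonneg) auto
  have "(\<Sum>i\<in>S. lamS i) \<le> real (card S) * (t - rho)" using small unfolding S_def by (intro sum_bounded_above) auto
  hence a_hi: "a \<le> t - rho" using cS by (simp add: a_def divide_le_eq mult.commute)
  define lam2 where "lam2 i = (if k < i then a else lamS i)" for i
  have diff0: "(\<Sum>i=1..n. lamS i - lam2 i) = 0"
  proof -
    have "(\<Sum>i=1..n. lamS i - lam2 i) = (\<Sum>i=1..n. if k < i then lamS i - a else 0)"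
      by (rule sum.cong) (auto simp: lam2_def)
    also have "\<dots> = 0" using sum_if_S[where g="\<lambda>i. lamS i - a" and n=n and k=k] sumS by (simp add: S_def)
    finally show ?thesis .
  qed
  have L2: "lam2 \<in> Lset n"
  proof -
    have "(\<Sum>i=1..n. lam2 i) = real n" using diff0 sn by (simp add: sum_subtractf)
    moreover have "\<forall>i\<in>{1..n}. 0 \<le> lam2 i" using nn a_lo by (auto simp: lam2_def)
    ultimately show ?thesis by (simp add: Lset_def)
  qed
  have "D_wf n lam2 t = D_wf n lamS t"
  proof -
    have "(\<Sum>i=1..n. min (lam2 i) t) - (\<Sum>i=1..n. min (lamS i) t) = (\<Sum>i=1..n. if k < i then a - lamS i else 0)"
      unfolding sum_subtractf[symmetric]
    proof (rule sum.cong)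
      fix i assume i: "i \<in> {1..n}"
      show "min (lam2 i) t - min (lamS i) t = (if k < i then a - lamS i else 0)"
      proof (cases "k < i")
        case True
        hence "i \<in> {k+1..n}" using i by auto
        hence "lamS i \<le> t - rho" using small by blast
        hence "lamS i \<le> t" using rho by linarith
        moreover have "a \<le> t" using a_hi rho by linarith
        ultimately show ?thesis using True by (simp add: lam2_def)
      qed (simp add: lam2_def)
    qed simp
    also have "\<dots> = 0" using sum_if_S[where g="\<lambda>i. a - lamS i" and n=n and k=k] sumS
      by (simp add: S_def sum_subtractf)
    finally show ?thesis by (simp add: D_wf_def)
  qed
  hence tw2: "t_wf n lam2 Ds = t" using twf_eq[OF L2 assms(1,4) t(1)] t by simp
  have F2: "lam2 \<in> Fset n k Ds rho"
    using L2 tw2 big a_lo a_hi by (auto simp: Fset_def lam2_def)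
  have Rwf: "R_wf n lam2 t = R_wf n lamS t"
  proof -
    have lg: "max 0 (log 2 (x / t)) = 0" if "0 \<le> x" "x \<le> t" for x
    proof (cases "x = 0")
      case False
      hence "x / t \<le> 1" "0 < x / t" using that t by auto
      thus ?thesis by simp
    qed (simp add: log_def)
    have "(\<Sum>i=1..n. max 0 (log 2 (lam2 i / t))) = (\<Sum>i=1..n. max 0 (log 2 (lamS i / t)))"
    proof (rule sum.cong)
      fix i assume i: "i \<in> {1..n}"
      show "max 0 (log 2 (lam2 i / t)) = max 0 (log 2 (lamS i / t))"
      proof (cases "k < i")
        case True
        hence "i \<in> {k+1..n}" using i by auto
        hence "0 \<le> lamS i" "lamS i \<le> t - rho" using small by blast+
        hence "0 \<le> lamS i" "lamS i \<le> t" using rho by linarith+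
        moreover have "a \<le> t" using a_hi rho by linarith
        ultimately show ?thesis using True a_lo lg by (simp add: lam2_def)
      qed (simp add: lam2_def)
    qed simp
    thus ?thesis by (simp add: R_wf_def)
  qed
  obtain T where T: "0 < T" "D_rc n lamS T = Ds" using Trc_exists[OF L assms(1,3,4)] by auto
  have Tr: "T_rc n lamS Ds = T" using Trc_eq[OF L assms(1) T] .
  obtain T2 where T2: "0 < T2" "D_rc n lam2 T2 = Ds" using Trc_exists[OF L2 assms(1,3,4)] by auto
  have Tr2: "T_rc n lam2 Ds = T2" using Trc_eq[OF L2 assms(1) T2] .
  have Dge: "Ds \<le> D_rc n lam2 T"
  proof -
    define c where "c = 1/(1+a*T)^2"
    have "(\<Sum>i=1..n. lamS i / (1 + lamS i * T)) \<le> (\<Sum>i=1..n. lam2 i / (1 + lam2 i * T) + c * (lamS i - lam2 i))"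
    proof (rule sum_mono)
      fix i assume i: "i \<in> {1..n}"
      show "lamS i / (1 + lamS i * T) \<le> lam2 i / (1 + lam2 i * T) + c * (lamS i - lam2 i)"
      proof (cases "k < i")
        case True
        thus ?thesis using tan_frac[of "lamS i" a T] nn i a_lo T by (simp add: lam2_def c_def)
      qed (simp add: lam2_def)
    qed
    also have "\<dots> = (\<Sum>i=1..n. lam2 i / (1 + lam2 i * T)) + c * (\<Sum>i=1..n. lamS i - lam2 i)"
      by (simp add: sum.distrib sum_distrib_left)
    finally have "(\<Sum>i=1..n. lamS i / (1 + lamS i * T)) \<le> (\<Sum>i=1..n. lam2 i / (1 + lam2 i * T))"
      using diff0 by simp
    hence "(\<Sum>i=1..n. lamS i / (1 + lamS i * T)) / real n \<le> (\<Sum>i=1..n. lam2 i / (1 + lam2 i * T)) / real n"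
      by (intro divide_right_mono) auto
    thus ?thesis using T by (simp add: D_rc_def)
  qed
  have TT2: "T \<le> T2"
  proof (rule ccontr)
    assume "\<not> ?thesis"
    hence "D_rc n lam2 T < D_rc n lam2 T2" using Drc_strict[OF L2 assms(1) T2(1), of T] by simp
    thus False using Dge T2 by simp
  qed
  have R1: "R_rc n lam2 T \<le> R_rc n lam2 T2"
  proof -
    have "(\<Sum>i=1..n. log 2 (1 + lam2 i * T)) \<le> (\<Sum>i=1..n. log 2 (1 + lam2 i * T2))"
    proof (rule sum_mono)
      fix i assume i: "i \<in> {1..n}"
      hence l0: "0 \<le> lam2 i" using L2 by (simp add: Lset_def)
      hence "lam2 i * T \<le> lam2 i * T2" using TT2 by (intro mult_left_mono)
      moreover have "0 < 1 + lam2 i * T" using l0 T by (auto intro: add_pos_nonneg)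
      ultimately show "log 2 (1 + lam2 i * T) \<le> log 2 (1 + lam2 i * T2)" by simp
    qed
    thus ?thesis by (simp add: R_rc_def divide_right_mono)
  qed
  have R2: "R_rc n lamS T < R_rc n lam2 T"
  proof -
    define c where "c = T/((1+a*T)*ln 2)"
    obtain i0 where i0: "i0 \<in> S" "lamS i0 \<noteq> a" using ij by (metis S_def)
    have "(\<Sum>i=1..n. log 2 (1 + lamS i * T)) < (\<Sum>i=1..n. log 2 (1 + lam2 i * T) + (lamS i - lam2 i) * c)"
    proof (rule sum_strict_mono_ex1)
      show "\<forall>i\<in>{1..n}. log 2 (1 + lamS i * T) \<le> log 2 (1 + lam2 i * T) + (lamS i - lam2 i) * c"
      proof
        fix i assume i: "i \<in> {1..n}"
        show "log 2 (1 + lamS i * T) \<le> log 2 (1 + lam2 i * T) + (lamS i - lam2 i) * c"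
        proof (cases "k < i")
          case True
          thus ?thesis using tan_log(1)[of "lamS i" a T] nn i a_lo T by (simp add: lam2_def c_def)
        qed (simp add: lam2_def)
      qed
      have i0': "i0 \<in> {1..n}" "k < i0" using i0 assms(2) by (auto simp: S_def)
      show "\<exists>i\<in>{1..n}. log 2 (1 + lamS i * T) < log 2 (1 + lam2 i * T) + (lamS i - lam2 i) * c"
        using tan_log(2)[of "lamS i0" a T] nn i0' i0 a_lo T by (intro bexI[OF _ i0'(1)]) (simp add: lam2_def c_def)
    qed simp
    also have "\<dots> = (\<Sum>i=1..n. log 2 (1 + lam2 i * T)) + (\<Sum>i=1..n. lamS i - lam2 i) * c"
      by (simp add: sum.distrib sum_distrib_right)
    finally have "(\<Sum>i=1..n. log 2 (1 + lamS i * T)) < (\<Sum>i=1..n. log 2 (1 + lam2 i * T))"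
      using diff0 by simp
    thus ?thesis using assms(1) by (simp add: R_rc_def divide_strict_right_mono)
  qed
  have "Gobj n Ds lamS < Gobj n Ds lam2"
    using R1 R2 Rwf by (simp add: Gobj_def RR_rc_def RR_wf_def Tr Tr2 tw tw2)
  moreover have "Gobj n Ds lam2 \<le> Gobj n Ds lamS" using assms(8) F2 by (simp add: rho_def)
  ultimately show False by simp
qed

end
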